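(* Let $D\ge1$ and $a_0,\dots,a_{2D-1}\in\mathbb C$ satisfy $\sum_k\overline{a_k}a_{k+2\ell}=\delta_{0,\ell}$ for all $\ell$ and $\sum_ka_k=\sqrt2$. Then for every $k\in\mathbb N$ and $i_1,\dots,i_k\in\{0,1\}$, $$\mu_0\Big(\Big[\tfrac{i_1}2+\cdots+\tfrac{i_k}{2^k},\ \tfrac{i_1}2+\cdots+\tfrac{i_k}{2^k}+\tfrac1{2^k}\Big)\Big)\ \ge\ |a_0|^{2\cdot\#\{r:i_r=0\}}\,|a_{2D-1}|^{2\cdot\#\{r:i_r=1\}}.$$
   Context: $\mathbb T$ unit circle with normalized Haar measure, $L^2(\mathbb T)$ with $\langle f\mid g\rangle=\int\overline fg$, $e_n(z)=z^n$. $m_0(z)=\sum_{k=0}^{2D-1}a_kz^k$, $m_1(z)=z^{2D-1}\overline{m_0(-z)}$, $(S_if)(z)=m_i(z)f(z^2)$. $\mu_0$ is the Borel probability measure on $[0,1]$ determined by $\mu_0([\xi,\xi+2^{-k}))=\|S_{i_k}^*\cdots S_{i_1}^*e_0\|^2$ for every $\xi=\sum_{r=1}^ki_r2^{-r}$, $i_r\in\{0,1\}$. *)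

theory Defs
  imports "HOL-Probability.Probability"
begin

definition circle_measure :: "complex measure" where
  "circle_measure = distr (lebesgue_on {0..1}) borel (\<lambda>t. cis (2 * pi * t))"

definition L2_norm_sq :: "(complex \<Rightarrow> complex) \<Rightarrow> real" where
  "L2_norm_sq f = (\<integral>z. (cmod (f z))\<^sup>2 \<partial>circle_measure)"

definition e_fun :: "nat \<Rightarrow> complex \<Rightarrow> complex" where
  "e_fun n z = z ^ n"

definition m0 :: "(nat \<Rightarrow> complex) \<Rightarrow> nat \<Rightarrow> complex \<Rightarrow> complex" where
  "m0 a D z = (\<Sum>k<2*D. a k * z ^ k)"

definition m1 :: "(nat \<Rightarrow> complex) \<Rightarrow> nat \<Rightarrow> complex \<Rightarrow> complex" where
  "m1 a D z = z ^ (2*D - 1) * cnj (m0 a D (- z))"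

definition mfilt :: "(nat \<Rightarrow> complex) \<Rightarrow> nat \<Rightarrow> nat \<Rightarrow> complex \<Rightarrow> complex" where
  "mfilt a D i = (if i = 0 then m0 a D else m1 a D)"

definition S_op :: "(nat \<Rightarrow> complex) \<Rightarrow> nat \<Rightarrow> nat \<Rightarrow> (complex \<Rightarrow> complex) \<Rightarrow> complex \<Rightarrow> complex" where
  "S_op a D i f z = mfilt a D i z * f (z\<^sup>2)"

text \<open>Its L2-adjoint, written out explicitly:
  (S_i^* f)(z) = 1/2 * sum over w with w^2 = z of conj(m_i(w)) f(w).\<close>
definition S_adj :: "(nat \<Rightarrow> complex) \<Rightarrow> nat \<Rightarrow> nat \<Rightarrow> (complex \<Rightarrow> complex) \<Rightarrow> complex \<Rightarrow> complex" where
  "S_adj a D i f z =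
     (cnj (mfilt a D i (csqrt z)) * f (csqrt z)
      + cnj (mfilt a D i (- csqrt z)) * f (- csqrt z)) / 2"

text \<open>S_{i_k}^* ... S_{i_1}^* e_0  (S_{i_1}^* is applied first).\<close>
fun adj_word :: "(nat \<Rightarrow> complex) \<Rightarrow> nat \<Rightarrow> (nat \<Rightarrow> nat) \<Rightarrow> nat \<Rightarrow> complex \<Rightarrow> complex" where
  "adj_word a D i 0 = e_fun 0"
| "adj_word a D i (Suc k) = S_adj a D (i (Suc k)) (adj_word a D i k)"

definition dyadic_point :: "(nat \<Rightarrow> nat) \<Rightarrow> nat \<Rightarrow> real" where
  "dyadic_point i k = (\<Sum>r=1..k. real (i r) / 2 ^ r)"

end

theory Submission imports Defs "HOL-Computational_Algebra.Polynomial" begin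

lemma csqrt_meas: "csqrt \<in> borel_measurable borel"
proof -
  have e: "csqrt = (\<lambda>z. Complex (sqrt ((cmod z + Re z) / 2)) ((if Im z = 0 then 1 else sgn (Im z)) * sqrt ((cmod z - Re z) / 2)))"
    by (rule ext) (simp add: complex_eq_iff)
  show ?thesis unfolding e borel_measurable_complex_iff by simp
qed

lemma ncsqrt_meas: "(\<lambda>z. - csqrt z) \<in> borel_measurable borel"
  using csqrt_meas by measurable

lemma mfilt_cont: "continuous_on UNIV (mfilt a D i)"
  unfolding mfilt_def m0_def m1_def by (auto intro!: continuous_intros)

lemma mfilt_meas: "mfilt a D i \<in> borel_measurable borel"
  using mfilt_cont borel_measurable_continuous_onI by blast

lemma adj_meas: "adj_word a D i k \<in> borel_measurable borel"
proof (induction k)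
  case 0
  then show ?case by (simp add: e_fun_def)
next
  case (Suc k)
  define f where "f = adj_word a D i k"
  define m where "m = mfilt a D (i (Suc k))"
  have f: "f \<in> borel_measurable borel" using Suc f_def by simp
  have m: "m \<in> borel_measurable borel" using mfilt_meas m_def by simp
  have 1: "(\<lambda>z. f (csqrt z)) \<in> borel_measurable borel" by (rule measurable_compose[OF csqrt_meas f])
  have 2: "(\<lambda>z. f (- csqrt z)) \<in> borel_measurable borel" by (rule measurable_compose[OF ncsqrt_meas f])
  have 3: "(\<lambda>z. m (csqrt z)) \<in> borel_measurable borel" by (rule measurable_compose[OF csqrt_meas m])
  have 4: "(\<lambda>z. m (- csqrt z)) \<in> borel_measurable borel" by (rule measurable_compose[OF ncsqrt_meas m])
  have "adj_word a D i (Suc k) = (\<lambda>z. (cnj (m (csqrt z)) * f (csqrt z) + cnj (m (- csqrt z)) * f (- csqrt z)) / 2)"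
    by (simp add: f_def m_def S_adj_def fun_eq_iff)
  have cc: "cnj \<in> borel_measurable (borel :: complex measure)"
    by (intro borel_measurable_continuous_onI continuous_intros)
  have 5: "(\<lambda>z. cnj (m (csqrt z))) \<in> borel_measurable borel" by (rule measurable_compose[OF 3 cc])
  have 6: "(\<lambda>z. cnj (m (- csqrt z))) \<in> borel_measurable borel" by (rule measurable_compose[OF 4 cc])
  note [measurable] = 1 2 5 6
  show ?case unfolding \<open>adj_word a D i (Suc k) = _\<close> by measurable
qed

lemma dcis: fixes c :: complex assumes "c \<noteq> 0"
  shows "((\<lambda>t::real. exp (c * complex_of_real t) / c) has_vector_derivative (exp (c * complex_of_real t))) (at t within S)"
  by (rule has_vector_derivative_real_field) (auto intro!: derivative_eq_intros simp: field_simps assms)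

lemma prob01: "prob_space (lebesgue_on {0..1::real})"
  apply (rule prob_spaceI)
  apply (subst emeasure_restrict_space) by auto

lemma int_cis:
  assumes j: "j \<ge> 1"
  shows "integral\<^sup>L (lebesgue_on {0..1::real}) (\<lambda>t. cnj (cis (2*pi*t)) ^ j) = 0"
proof -
  define c where "c = - (2 * pi * real j) * \<i>"
  have c0: "c \<noteq> 0" using j by (simp add: c_def)
  have e: "cnj (cis (2*pi*t)) ^ j = exp (c * complex_of_real t)" for t
  proof -
    have "cnj (cis (2*pi*t)) ^ j = cis (-(2*pi*t)) ^ j" by (simp add: cis_cnj)
    also have "\<dots> = cis (real j * (-(2*pi*t)))" by (rule Complex.DeMoivre)
    also have "\<dots> = exp (c * complex_of_real t)" unfolding cis_conv_exp c_def by (simp add: algebra_simps)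
    finally show ?thesis .
  qed
  have ec: "exp c = 1"
  proof -
    have "exp c = cnj (cis (2*pi*1)) ^ j" using e[of 1] by simp
    also have "\<dots> = 1" by simp
    finally show ?thesis .
  qed
  have cont: "continuous_on {0..1} (\<lambda>t::real. exp (c * complex_of_real t))"
    by (auto intro!: continuous_intros)
  have "((\<lambda>t. exp (c * complex_of_real t)) has_integral (exp (c * 1) / c - exp (c * 0) / c)) {0..1::real}"
    using fundamental_theorem_of_calculus[of 0 1 "\<lambda>t::real. exp (c * complex_of_real t) / c" "\<lambda>t. exp (c * complex_of_real t)"]
    using dcis c0 by simp
  then have h: "((\<lambda>t. exp (c * complex_of_real t)) has_integral 0) {0..1::real}"
    using ec by simp
  have "((\<lambda>t. exp (c * complex_of_real t)) has_integral integral\<^sup>L (lebesgue_on {0..1::real}) (\<lambda>t. exp (c * complex_of_real t))) {0..1}"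
    by (rule has_integral_integral_lebesgue_on) (auto intro: continuous_imp_integrable_real cont)
  then show ?thesis using h has_integral_unique e by simp
qed

lemma evenodd: fixes p :: "complex poly" shows "\<exists>q r. (\<forall>x. poly p x = poly q (x^2) + x * poly r (x^2)) \<and> coeff q 0 = coeff p 0"
proof (induction p)
  case 0
  show ?case by (rule exI[of _ 0], rule exI[of _ 0]) simp
next
  case (pCons a p)
  then obtain q r where qr: "\<forall>x. poly p x = poly q (x^2) + x * poly r (x^2)" by blast
  show ?case
  proof (rule exI[of _ "pCons a r"], rule exI[of _ q], intro conjI allI)
    fix x
    show "poly (pCons a p) x = poly (pCons a r) (x\<^sup>2) + x * poly q (x\<^sup>2)"
    proof -
      have "poly (pCons a p) x = a + x * (poly q (x^2) + x * poly r (x^2))" using qr by simp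
      also have "\<dots> = poly (pCons a r) (x\<^sup>2) + x * poly q (x\<^sup>2)"
        by simp algebra
      finally show ?thesis .
    qed
  qed simp
qed

lemma filt:
  assumes D: "D \<ge> 1"
  shows "\<exists>M. (\<forall>w. cmod w = 1 \<longrightarrow> cnj (mfilt a D i w) = poly M (cnj w))
             \<and> coeff M 0 = (if i = 0 then cnj (a 0) else - a (2*D-1))"
proof (cases "i = 0")
  case True
  define M where "M = (\<Sum>k<2*D. monom (cnj (a k)) k)"
  have "cnj (mfilt a D i w) = poly M (cnj w)" for w
    by (simp add: True mfilt_def m0_def M_def poly_sum poly_monom)
  moreover have "coeff M 0 = cnj (a 0)"
    unfolding M_def coeff_sum coeff_monom using D
    by (subst sum.cong[OF refl, of _ _ "\<lambda>k. if k = 0 then cnj (a k) else 0"]) auto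
  ultimately show ?thesis using True by auto
next
  case False
  define M where "M = (\<Sum>k<2*D. monom (a k * (-1)^k) (2*D-1-k))"
  have "cnj (mfilt a D i w) = poly M (cnj w)" if w: "cmod w = 1" for w
  proof -
    have ww: "cnj w * w = 1" using w
      by (metis complex_norm_square mult.commute of_real_1 power_one)
    have "cnj (mfilt a D i w) = cnj w ^ (2*D-1) * (\<Sum>k<2*D. a k * (- w) ^ k)"
      by (simp add: False mfilt_def m1_def m0_def)
    also have "\<dots> = (\<Sum>k<2*D. a k * (-1)^k * cnj w ^ (2*D-1-k))"
      unfolding sum_distrib_left
    proof (rule sum.cong[OF refl])
      fix k assume "k \<in> {..<2*D}"
      then have "2*D-1 = (2*D-1-k) + k" by auto
      then have eq: "(2*D-1-k) + k = 2*D-1" by simp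
      have "cnj w ^ (2*D-1) = cnj w ^ (2*D-1-k) * cnj w ^ k"
        by (simp only: power_add[symmetric] eq)
      then have "cnj w ^ (2*D-1) * w ^ k = cnj w ^ (2*D-1-k) * (cnj w * w) ^ k"
        by (simp only: power_mult_distrib mult.assoc)
      then have "cnj w ^ (2*D-1) * w ^ k = cnj w ^ (2*D-1-k)" using ww by simp
      then have h: "cnj w ^ (2*D-1) * w ^ k = cnj w ^ (2*D-1-k)" .
      have "cnj w ^ (2*D-1) * (a k * (- w) ^ k) = a k * (-1)^k * (cnj w ^ (2*D-1) * w ^ k)"
        unfolding power_minus[of w k] by (simp only: ac_simps)
      then show "cnj w ^ (2*D-1) * (a k * (- w) ^ k) = a k * (-1)^k * cnj w ^ (2*D-1-k)"
        unfolding h .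
    qed
    also have "\<dots> = poly M (cnj w)"
      by (simp add: M_def poly_sum poly_monom)
    finally show ?thesis .
  qed
  moreover have "coeff M 0 = - a (2*D-1)"
  proof -
    have "coeff M 0 = (\<Sum>k<2*D. if k = 2*D-1 then a k * (-1)^k else 0)"
      unfolding M_def coeff_sum coeff_monom
      by (rule sum.cong[OF refl]) auto
    also have "\<dots> = a (2*D-1) * (-1)^(2*D-1)" using D by (simp add: sum.delta)
    also have "\<dots> = - a (2*D-1)" using D by (simp add: power_minus_odd)
    finally show ?thesis .
  qed
  ultimately show ?thesis using False by auto
qed

definition cfac :: "(nat \<Rightarrow> complex) \<Rightarrow> nat \<Rightarrow> nat \<Rightarrow> complex" where
  "cfac a D j = (if j = 0 then cnj (a 0) else - a (2*D-1))"

lemma adj_poly: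
  assumes D: "D \<ge> 1"
  shows "\<exists>p. (\<forall>z. cmod z = 1 \<longrightarrow> adj_word a D i k z = poly p (cnj z))
             \<and> coeff p 0 = (\<Prod>r\<in>{1..k}. cfac a D (i r))"
proof (induction k)
  case 0
  show ?case by (rule exI[of _ 1]) (simp add: e_fun_def)
next
  case (Suc k)
  then obtain p where p: "\<forall>z. cmod z = 1 \<longrightarrow> adj_word a D i k z = poly p (cnj z)"
     and p0: "coeff p 0 = (\<Prod>r\<in>{1..k}. cfac a D (i r))" by blast
  obtain M where M: "\<forall>w. cmod w = 1 \<longrightarrow> cnj (mfilt a D (i (Suc k)) w) = poly M (cnj w)"
     and M0: "coeff M 0 = cfac a D (i (Suc k))"
    using filt[OF D, of a "i (Suc k)"] unfolding cfac_def by blast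
  obtain q r where qr: "\<forall>x. poly (M * p) x = poly q (x^2) + x * poly r (x^2)"
     and q0: "coeff q 0 = coeff (M * p) 0" using evenodd by blast
  show ?case
  proof (rule exI[of _ q], intro conjI allI impI)
    fix z :: complex assume z: "cmod z = 1"
    define w where "w = csqrt z"
    have w2: "w^2 = z" by (simp add: w_def)
    have "cmod w ^ 2 = 1" using z w2 by (metis norm_power)
    then have w: "cmod w = 1" using norm_ge_zero[of w] by (auto simp: power2_eq_1_iff)
    have mw: "cmod (- w) = 1" using w by simp
    have cw: "cnj w ^ 2 = cnj z" using w2 by (metis complex_cnj_power)
    have "adj_word a D i (Suc k) z =
       (cnj (mfilt a D (i (Suc k)) w) * adj_word a D i k w
        + cnj (mfilt a D (i (Suc k)) (- w)) * adj_word a D i k (- w)) / 2"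
      by (simp add: S_adj_def w_def)
    also have "\<dots> = (poly (M * p) (cnj w) + poly (M * p) (- cnj w)) / 2"
      using M p w mw by simp
    also have "\<dots> = poly q (cnj z)"
      using qr cw by simp
    finally show "adj_word a D i (Suc k) z = poly q (cnj z)" .
  next
    show "coeff q 0 = (\<Prod>r\<in>{1..Suc k}. cfac a D (i r))"
      using q0 p0 M0 by (simp add: coeff_mult_0 prod.cl_ivl_Suc mult.commute)
  qed
qed

lemma cont_poly: "continuous_on S (\<lambda>t::real. poly p (cnj (cis (2*pi*t))))"
  by (auto intro!: continuous_intros)

lemma int_poly: "integral\<^sup>L (lebesgue_on {0..1::real}) (\<lambda>t. poly p (cnj (cis (2*pi*t)))) = coeff p 0"
proof -
  have "integral\<^sup>L (lebesgue_on {0..1::real}) (\<lambda>t. poly p (cnj (cis (2*pi*t))))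
     = (\<Sum>j\<le>degree p. integral\<^sup>L (lebesgue_on {0..1::real}) (\<lambda>t. coeff p j * cnj (cis (2*pi*t)) ^ j))"
    unfolding poly_altdef
    by (subst Bochner_Integration.integral_sum) (auto intro!: continuous_imp_integrable_real continuous_intros)
  also have "\<dots> = (\<Sum>j\<le>degree p. if j = 0 then coeff p j else 0)"
  proof (rule sum.cong[OF refl])
    fix j
    interpret P: prob_space "lebesgue_on {0..1::real}" by (rule prob01)
    show "integral\<^sup>L (lebesgue_on {0..1::real}) (\<lambda>t. coeff p j * cnj (cis (2*pi*t)) ^ j) = (if j = 0 then coeff p j else 0)"
    proof -
      have "P.prob {0..1} = 1" using P.prob_space by (simp add: space_restrict_space)
      then show ?thesis using int_cis[of j] by auto
    qed
  qed
  also have "\<dots> = coeff p 0" by (simp add: sum.delta)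
  finally show ?thesis .
qed

lemma ineq:
  fixes g :: "real \<Rightarrow> complex"
  assumes g: "continuous_on {0..1} g"
  shows "(cmod (integral\<^sup>L (lebesgue_on {0..1}) g))^2 \<le> integral\<^sup>L (lebesgue_on {0..1}) (\<lambda>t. (cmod (g t))^2)"
proof -
  interpret P: prob_space "lebesgue_on {0..1::real}" by (rule prob01)
  define X where "X t = cmod (g t)" for t
  have iX: "integrable (lebesgue_on {0..1}) X" unfolding X_def
    by (auto intro!: continuous_imp_integrable_real continuous_intros g)
  have iX2: "integrable (lebesgue_on {0..1}) (\<lambda>t. (X t)^2)" unfolding X_def
    by (auto intro!: continuous_imp_integrable_real continuous_intros g)
  have "0 \<le> P.variance X" by (rule P.variance_positive)
  then have v: "(P.expectation X)^2 \<le> P.expectation (\<lambda>t. (X t)^2)"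
    using P.variance_eq[OF iX iX2] by simp
  have "cmod (integral\<^sup>L (lebesgue_on {0..1}) g) \<le> P.expectation X"
    unfolding X_def by (rule integral_norm_bound)
  then have a: "(cmod (integral\<^sup>L (lebesgue_on {0..1}) g))^2 \<le> (P.expectation X)^2"
    by (rule power_mono) simp
  show ?thesis using order_trans[OF a v] unfolding X_def .
qed

theorem proposition3p8:
  fixes D :: nat and a :: "nat \<Rightarrow> complex" and \<mu> :: "real measure"
  assumes D: "D \<ge> 1"
    and orth: "\<And>l::int. (\<Sum>k | k < 2*D \<and> 0 \<le> int k + 2*l \<and> int k + 2*l < int (2*D).
                       cnj (a k) * a (nat (int k + 2*l))) = (if l = 0 then 1 else 0)"
    and sum_a: "(\<Sum>k<2*D. a k) = complex_of_real (sqrt 2)"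
    and prob: "prob_space \<mu>"
    and sets_mu: "sets \<mu> = sets (restrict_space borel {0..1::real})"
    and mu_def: "\<And>k (i :: nat \<Rightarrow> nat). (\<forall>r\<in>{1..k}. i r \<in> {0,1}) \<Longrightarrow>
        measure \<mu> {dyadic_point i k ..< dyadic_point i k + 1 / 2 ^ k}
          = L2_norm_sq (adj_word a D i k)"
    and i01: "\<forall>r\<in>{1..k}. i r \<in> {0,1}"
  shows "measure \<mu> {dyadic_point i k ..< dyadic_point i k + 1 / 2 ^ k}
           \<ge> cmod (a 0) ^ (2 * card {r\<in>{1..k}. i r = 0})
             * cmod (a (2*D - 1)) ^ (2 * card {r\<in>{1..k}. i r = 1})"
proof -
  have m: "measure \<mu> {dyadic_point i k ..< dyadic_point i k + 1 / 2 ^ k} = L2_norm_sq (adj_word a D i k)"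
    using mu_def i01 by blast
  obtain p where p: "\<forall>z. cmod z = 1 \<longrightarrow> adj_word a D i k z = poly p (cnj z)"
     and p0: "coeff p 0 = (\<Prod>r\<in>{1..k}. cfac a D (i r))"
    using adj_poly[OF D, of a i k] by blast
  define f where "f = adj_word a D i k"
  have fm: "f \<in> borel_measurable borel" unfolding f_def by (rule adj_meas)
  have fm2: "(\<lambda>z. (cmod (f z))\<^sup>2) \<in> borel_measurable borel" using fm by measurable
  have Tm: "(\<lambda>t::real. cis (2 * pi * t)) \<in> borel_measurable (lebesgue_on {0..1})"
    by (rule continuous_imp_measurable_on_sets_lebesgue) (auto intro!: continuous_intros)
  have "L2_norm_sq f = integral\<^sup>L (lebesgue_on {0..1}) (\<lambda>t. (cmod (f (cis (2 * pi * t))))\<^sup>2)"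
    unfolding L2_norm_sq_def circle_measure_def
    by (rule integral_distr[OF Tm fm2])
  also have "\<dots> = integral\<^sup>L (lebesgue_on {0..1}) (\<lambda>t. (cmod (poly p (cnj (cis (2 * pi * t)))))\<^sup>2)"
    by (rule Bochner_Integration.integral_cong[OF refl]) (simp add: f_def p)
  also have "\<dots> \<ge> (cmod (integral\<^sup>L (lebesgue_on {0..1}) (\<lambda>t. poly p (cnj (cis (2 * pi * t))))))^2"
    by (rule ineq[OF cont_poly])
  finally have ge: "L2_norm_sq f \<ge> (cmod (coeff p 0))^2" by (simp add: int_poly)
  have A: "{1..k} \<inter> {r. i r = 0} = {r\<in>{1..k}. i r = 0}" by auto
  have B: "{1..k} \<inter> - {r. i r = 0} = {r\<in>{1..k}. i r = 1}" using i01 by auto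
  have "cmod (coeff p 0) = (\<Prod>r\<in>{1..k}. cmod (cfac a D (i r)))"
    unfolding p0 by (rule prod_norm[symmetric])
  also have "\<dots> = (\<Prod>r\<in>{1..k}. if i r = 0 then cmod (a 0) else cmod (a (2*D-1)))"
    by (rule prod.cong) (auto simp: cfac_def)
  also have "\<dots> = (\<Prod>r\<in>{1..k} \<inter> {r. i r = 0}. cmod (a 0)) * (\<Prod>r\<in>{1..k} \<inter> - {r. i r = 0}. cmod (a (2*D-1)))"
    by (rule prod.If_cases) simp
  also have "\<dots> = cmod (a 0) ^ card {r\<in>{1..k}. i r = 0} * cmod (a (2*D-1)) ^ card {r\<in>{1..k}. i r = 1}"
    unfolding A B by simp
  finally have c: "(cmod (coeff p 0))^2 = cmod (a 0) ^ (2 * card {r\<in>{1..k}. i r = 0})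
             * cmod (a (2*D - 1)) ^ (2 * card {r\<in>{1..k}. i r = 1})"
    by (simp add: power_mult_distrib power_mult[symmetric] mult.commute)
  show ?thesis using m ge c f_def by simp
qed

end
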